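(* Let $\mathfrak{Q}\subset\mathbb{R}^2$ be an open subset with vanishing first de Rham cohomology $H^1_{dR}(\mathfrak{Q})=0$, and let $(\theta_t)_{t\in\mathbb{R}}$ be a twisted-periodic $1$-form on $\mathfrak{Q}$ (see context). For a loop $q\in\Lambda\mathfrak{Q}:=W^{1,2}(S^1,\mathfrak{Q})$, viewed as a $1$-periodic map $\mathbb{R}\to\mathfrak{Q}$, and $k\in\mathbb{Z}$, set $$\int_k^{k+1}q^*\theta:=\int_k^{k+1}\theta_t|_{q_t}\dot q_t\,dt.$$ Then this quantity is independent of $k\in\mathbb{Z}$; hence it defines a map $\Lambda\mathfrak{Q}\to\mathbb{R}$.
   Context: $S^1=\mathbb{R}/\mathbb{Z}$. A twisted-periodic $1$-form on $\mathfrak{Q}$ is a smooth family $\theta_t=A^1_t\,dq_1+A^2_t\,dq_2$, $t\in\mathbb{R}$, with smooth $A^1,A^2\colon\mathbb{R}\times\mathfrak{Q}\to\mathbb{R}$, such that $\dot\theta_{t+1}=\dot\theta_t$ and $d\theta_{t+1}=d\theta_t$ for all $t$, where the dot is the derivative in $t$ and $d$ the exterior derivative on $\mathfrak{Q}$. *)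

theory Defs
  imports "HOL-Analysis.Analysis"
begin

fun higher_differentiable_on ::
  "'a::real_normed_vector set \<Rightarrow> ('a \<Rightarrow> 'b::real_normed_vector) \<Rightarrow> nat \<Rightarrow> bool" where
  "higher_differentiable_on S f 0 = continuous_on S f"
| "higher_differentiable_on S f (Suc n) =
     ((\<forall>x\<in>S. f differentiable (at x)) \<and>
      (\<forall>v. higher_differentiable_on S (\<lambda>x. frechet_derivative f (at x) v) n))"

definition smooth_on :: "'a::real_normed_vector set \<Rightarrow> ('a \<Rightarrow> 'b::real_normed_vector) \<Rightarrow> bool" where
  "smooth_on S f \<longleftrightarrow> (\<forall>n. higher_differentiable_on S f n)"

definition d1 :: "(real \<times> real \<Rightarrow> real) \<Rightarrow> real \<times> real \<Rightarrow> real" where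
  "d1 f q = deriv (\<lambda>x. f (x, snd q)) (fst q)"

definition d2 :: "(real \<times> real \<Rightarrow> real) \<Rightarrow> real \<times> real \<Rightarrow> real" where
  "d2 f q = deriv (\<lambda>y. f (fst q, y)) (snd q)"

(* H^1_dR(Q) = 0: every closed smooth 1-form B1 dq1 + B2 dq2 on Q is exact *)
definition vanishing_H1_dR :: "(real \<times> real) set \<Rightarrow> bool" where
  "vanishing_H1_dR Q \<longleftrightarrow>
     (\<forall>B1 B2. smooth_on Q B1 \<and> smooth_on Q B2 \<and> (\<forall>q\<in>Q. d1 B2 q = d2 B1 q) \<longrightarrow>
        (\<exists>f. smooth_on Q f \<and> (\<forall>q\<in>Q. d1 f q = B1 q \<and> d2 f q = B2 q)))"

(* theta_t = A1 t dq1 + A2 t dq2, a twisted-periodic 1-form on Q *)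
definition twisted_periodic_form ::
  "(real \<times> real) set \<Rightarrow> (real \<Rightarrow> real \<times> real \<Rightarrow> real) \<Rightarrow> (real \<Rightarrow> real \<times> real \<Rightarrow> real) \<Rightarrow> bool" where
  "twisted_periodic_form Q A1 A2 \<longleftrightarrow>
     smooth_on (UNIV \<times> Q) (\<lambda>p. A1 (fst p) (snd p)) \<and>
     smooth_on (UNIV \<times> Q) (\<lambda>p. A2 (fst p) (snd p)) \<and>
     (\<forall>t. \<forall>q\<in>Q. deriv (\<lambda>s. A1 s q) (t + 1) = deriv (\<lambda>s. A1 s q) t \<and>
                 deriv (\<lambda>s. A2 s q) (t + 1) = deriv (\<lambda>s. A2 s q) t) \<and>
     (\<forall>t. \<forall>q\<in>Q. d1 (A2 (t + 1)) q - d2 (A1 (t + 1)) q = d1 (A2 t) q - d2 (A1 t) q)"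

definition W12_loop :: "(real \<times> real) set \<Rightarrow> (real \<Rightarrow> real \<times> real) \<Rightarrow> (real \<Rightarrow> real \<times> real) \<Rightarrow> bool" where
  "W12_loop Q q q' \<longleftrightarrow>
     (\<forall>t. q (t + 1) = q t) \<and> (\<forall>t. q t \<in> Q) \<and>
     (\<forall>a b. a \<le> b \<longrightarrow> (q' has_integral (q b - q a)) {a..b}) \<and>
     (\<forall>a b. (\<lambda>t. (norm (q' t))\<^sup>2) integrable_on {a..b})"

definition pullback_integrand ::
  "(real \<Rightarrow> real \<times> real \<Rightarrow> real) \<Rightarrow> (real \<Rightarrow> real \<times> real \<Rightarrow> real) \<Rightarrow>
   (real \<Rightarrow> real \<times> real) \<Rightarrow> (real \<Rightarrow> real \<times> real) \<Rightarrow> real \<Rightarrow> real" where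
  "pullback_integrand A1 A2 q q' t = A1 t (q t) * fst (q' t) + A2 t (q t) * snd (q' t)"

end

theory Submission
  imports Defs
begin



lemma hd_cong:
  assumes "open S" "\<And>x. x \<in> S \<Longrightarrow> f x = g x" "higher_differentiable_on S f n"
  shows "higher_differentiable_on S g n"
  using assms
proof (induction n arbitrary: f g)
  case 0
  then show ?case using continuous_on_cong by fastforce
next
  case (Suc n)
  have fd: "frechet_derivative f (at x) = frechet_derivative g (at x)" if "x \<in> S" for x
  proof -
    have "(f has_derivative D) (at x) \<longleftrightarrow> (g has_derivative D) (at x)" for D
      using has_derivative_transform_within_open[of f D x UNIV S g]
        has_derivative_transform_within_open[of g D x UNIV S f] Suc.prems that by auto
    then show ?thesis unfolding frechet_derivative_def by simp
  qed
  have "g differentiable (at x)" if xS: "x \<in> S" for x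
  proof -
    obtain D where "(f has_derivative D) (at x)" using Suc.prems xS by (auto simp: differentiable_def)
    then have "(g has_derivative D) (at x)"
      using has_derivative_transform_within_open[of f D x UNIV S g] Suc.prems xS by auto
    then show ?thesis by (auto simp: differentiable_def)
  qed
  moreover have "higher_differentiable_on S (\<lambda>x. frechet_derivative g (at x) v) n" for v
    using Suc.IH[of "\<lambda>x. frechet_derivative f (at x) v" "\<lambda>x. frechet_derivative g (at x) v"]
      Suc.prems fd by auto
  ultimately show ?case by simp
qed

lemma hd_diff:
  assumes "open S" "higher_differentiable_on S f n" "higher_differentiable_on S g n"
  shows "higher_differentiable_on S (\<lambda>x. f x - g x) n"
  using assms
proof (induction n arbitrary: f g)
  case 0
  then show ?case by (auto intro: continuous_intros)
next
  case (Suc n)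
  have fd: "frechet_derivative (\<lambda>x. f x - g x) (at x) v = frechet_derivative f (at x) v - frechet_derivative g (at x) v"
    if "x \<in> S" for x v
  proof -
    have "(f has_derivative frechet_derivative f (at x)) (at x)" "(g has_derivative frechet_derivative g (at x)) (at x)"
      using Suc.prems(2,3) that by (simp_all add: frechet_derivative_works[symmetric])
    then have "((\<lambda>x. f x - g x) has_derivative (\<lambda>v. frechet_derivative f (at x) v - frechet_derivative g (at x) v)) (at x)"
      by (intro derivative_intros)
    then show ?thesis using frechet_derivative_at by metis
  qed
  have "(\<lambda>x. f x - g x) differentiable (at x)" if "x \<in> S" for x
    using Suc.prems that by auto
  moreover have "higher_differentiable_on S (\<lambda>x. frechet_derivative (\<lambda>x. f x - g x) (at x) v) n" for v
    apply (rule hd_cong[OF \<open>open S\<close>, of "\<lambda>x. frechet_derivative f (at x) v - frechet_derivative g (at x) v"])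
    using fd Suc by auto
  ultimately show ?case by simp
qed

lemma hd_slice:
  fixes g :: "real \<times> 'a::real_normed_vector \<Rightarrow> 'b::real_normed_vector"
  assumes "open S" "higher_differentiable_on (UNIV \<times> S) g n"
  shows "higher_differentiable_on S (\<lambda>x. g (c, x)) n"
  using assms
proof (induction n arbitrary: g)
  case 0
  then show ?case
    by (auto intro!: continuous_on_compose2[of "UNIV \<times> S" g] continuous_intros)
next
  case (Suc n)
  have hd: "((\<lambda>y. g (c, y)) has_derivative (\<lambda>v. frechet_derivative g (at (c, x)) (0, v))) (at x)"
    if "x \<in> S" for x
  proof -
    have "(g has_derivative frechet_derivative g (at (c, x))) (at (c, x))"
      using Suc.prems that frechet_derivative_works by auto
    moreover have "((\<lambda>y. (c, y)) has_derivative (\<lambda>v. (0, v))) (at x)"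
      by (auto intro!: derivative_eq_intros)
    ultimately show ?thesis using diff_chain_at[of "\<lambda>y. (c, y)" "\<lambda>v. (0, v)" x g] by (simp add: o_def)
  qed
  have "(\<lambda>y. g (c, y)) differentiable (at x)" if "x \<in> S" for x
    using hd[OF that] differentiable_def by blast
  moreover have "higher_differentiable_on S (\<lambda>x. frechet_derivative (\<lambda>y. g (c, y)) (at x) v) n" for v
  proof (rule hd_cong[OF \<open>open S\<close>, of "\<lambda>x. frechet_derivative g (at (c, x)) (0, v)"])
    show "frechet_derivative g (at (c, x)) (0, v) = frechet_derivative (\<lambda>y. g (c, y)) (at x) v" if "x \<in> S" for x
      using hd[OF that] frechet_derivative_at by metis
    show "higher_differentiable_on S (\<lambda>x. frechet_derivative g (at (c, x)) (0, v)) n"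
      using Suc.IH[of "\<lambda>p. frechet_derivative g (at p) (0, v)"] Suc.prems by auto
  qed
  ultimately show ?case by simp
qed



lemma fd_partials:
  fixes f :: "real \<times> real \<Rightarrow> real"
  assumes D: "(f has_derivative D) (at x)"
  shows "D v = d1 f x * fst v + d2 f x * snd v"
proof -
  have lin: "linear D" using D has_derivative_linear by blast
  have e1: "D (a, 0) = a * D (1, 0)" for a
    using linear_scale[OF lin, of a "(1,0)"] by simp
  have e2: "D (0, a) = a * D (0, 1)" for a
    using linear_scale[OF lin, of a "(0,1)"] by simp
  have "D v = D (fst v, 0) + D (0, snd v)"
    using linear_add[OF lin, of "(fst v, 0)" "(0, snd v)"] by simp
  also have "\<dots> = fst v * D (1, 0) + snd v * D (0, 1)" using e1[of "fst v"] e2[of "snd v"] by linarith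
  finally have Dv: "D v = fst v * D (1, 0) + snd v * D (0, 1)" .
  have "((\<lambda>y. f (y, snd x)) has_derivative (\<lambda>d. D (d, 0))) (at (fst x))"
  proof -
    have "((\<lambda>y. (y, snd x)) has_derivative (\<lambda>d. (d, 0))) (at (fst x))"
      by (auto intro!: derivative_eq_intros)
    moreover have "(f has_derivative D) (at ((\<lambda>y. (y, snd x)) (fst x)))" using D by simp
    ultimately show ?thesis using diff_chain_at[of "\<lambda>y. (y, snd x)" _ "fst x" f D] by (simp add: o_def)
  qed
  then have "((\<lambda>y. f (y, snd x)) has_real_derivative D (1, 0)) (at (fst x))"
    unfolding has_field_derivative_def
    proof -
      assume h: "((\<lambda>y. f (y, snd x)) has_derivative (\<lambda>d. D (d, 0))) (at (fst x))"
      have "(\<lambda>d. D (d, 0)) = (*) (D (1, 0))" by (rule ext) (metis e1 mult.commute)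
      then show "((\<lambda>y. f (y, snd x)) has_derivative (*) (D (1, 0))) (at (fst x))" using h by simp
    qed
  then have 1: "d1 f x = D (1, 0)" unfolding d1_def by (rule DERIV_imp_deriv)
  have "((\<lambda>y. f (fst x, y)) has_derivative (\<lambda>d. D (0, d))) (at (snd x))"
  proof -
    have "((\<lambda>y. (fst x, y)) has_derivative (\<lambda>d. (0, d))) (at (snd x))"
      by (auto intro!: derivative_eq_intros)
    moreover have "(f has_derivative D) (at ((\<lambda>y. (fst x, y)) (snd x)))" using D by simp
    ultimately show ?thesis using diff_chain_at[of "\<lambda>y. (fst x, y)" _ "snd x" f D] by (simp add: o_def)
  qed
  then have "((\<lambda>y. f (fst x, y)) has_real_derivative D (0, 1)) (at (snd x))"
    unfolding has_field_derivative_def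
    proof -
      assume h: "((\<lambda>y. f (fst x, y)) has_derivative (\<lambda>d. D (0, d))) (at (snd x))"
      have "(\<lambda>d. D (0, d)) = (*) (D (0, 1))" by (rule ext) (metis e2 mult.commute)
      then show "((\<lambda>y. f (fst x, y)) has_derivative (*) (D (0, 1))) (at (snd x))" using h by simp
    qed
  then have 2: "d2 f x = D (0, 1)" unfolding d2_def by (rule DERIV_imp_deriv)
  show ?thesis using Dv 1 2 by simp
qed



lemma glue:
  fixes F M :: "real \<Rightarrow> real"
  assumes "a \<le> b"
    and loc: "\<And>e. e > 0 \<Longrightarrow> \<exists>d>0. \<forall>t t'. a \<le> t \<longrightarrow> t \<le> t' \<longrightarrow> t' \<le> b \<longrightarrow> t' - t < d \<longrightarrow>
                 \<bar>F t' - F t\<bar> \<le> e * (M t' - M t)"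
  shows "F b = F a"
proof -
  have bnd: "\<bar>F b - F a\<bar> \<le> e * (M b - M a)" if e: "e > 0" for e
  proof -
    obtain d where d: "d > 0" and dd: "\<forall>t t'. a \<le> t \<longrightarrow> t \<le> t' \<longrightarrow> t' \<le> b \<longrightarrow> t' - t < d \<longrightarrow>
                 \<bar>F t' - F t\<bar> \<le> e * (M t' - M t)" using loc[OF e] by blast
    obtain n :: nat where n: "(b - a) / d < real n" using reals_Archimedean2 by blast
    have npos: "n > 0"
    proof (rule ccontr)
      assume "\<not> n > 0"
      then have "n = 0" by simp
      with n have "(b - a) / d < 0" by simp
      moreover have "(b - a) / d \<ge> 0" using \<open>a \<le> b\<close> d by simp
      ultimately show False by simp
    qed
    define p where "p i = a + real i * (b - a) / real n" for i :: nat
    have p0: "p 0 = a" and pn: "p n = b" using npos by (auto simp: p_def)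
    have step: "p (Suc i) - p i = (b - a) / real n" for i
      by (simp add: p_def add_divide_distrib[symmetric] algebra_simps)
    have stepd: "(b - a) / real n < d" using n npos d
      by (simp add: field_simps mult.commute)
    have mono: "a \<le> p i" for i using \<open>a \<le> b\<close> npos by (auto simp: p_def)
    have le: "p i \<le> b" if "i \<le> n" for i
    proof -
      have "real i * (b - a) \<le> real n * (b - a)" using that \<open>a \<le> b\<close> by (intro mult_right_mono) auto
      then show ?thesis using npos by (simp add: p_def field_simps)
    qed
    have "F b - F a = (\<Sum>i<n. F (p (Suc i)) - F (p i))"
      using sum_lessThan_telescope[of "\<lambda>i. F (p i)" n] p0 pn by simp
    then have "\<bar>F b - F a\<bar> \<le> (\<Sum>i<n. \<bar>F (p (Suc i)) - F (p i)\<bar>)"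
      by (simp add: sum_abs)
    also have "\<dots> \<le> (\<Sum>i<n. e * (M (p (Suc i)) - M (p i)))"
    proof (rule sum_mono)
      fix i assume "i \<in> {..<n}"
      then have "Suc i \<le> n" by simp
      then show "\<bar>F (p (Suc i)) - F (p i)\<bar> \<le> e * (M (p (Suc i)) - M (p i))"
      proof -
        have "(b - a) / real n \<ge> 0" using \<open>a \<le> b\<close> by simp
        then have "p i \<le> p (Suc i)" using step[of i] by simp
        moreover have "p (Suc i) - p i < d" using step[of i] stepd by simp
        ultimately show ?thesis using dd mono[of i] le[OF \<open>Suc i \<le> n\<close>] by blast
      qed
    qed
    also have "\<dots> = e * (M b - M a)"
      using sum_lessThan_telescope[of "\<lambda>i. M (p i)" n] p0 pn by (simp add: sum_distrib_left[symmetric])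
    finally show ?thesis .
  qed
  show ?thesis
  proof (rule ccontr)
    assume ne: "F b \<noteq> F a"
    define c where "c = \<bar>M b - M a\<bar> + 1"
    have c: "c > 0" by (simp add: c_def add_pos_nonneg)
    define e where "e = \<bar>F b - F a\<bar> / (2 * c)"
    have e: "e > 0" using ne c by (simp add: e_def)
    have "\<bar>F b - F a\<bar> \<le> e * (M b - M a)" using bnd[OF e] .
    also have "\<dots> \<le> e * c" using e by (intro mult_left_mono) (auto simp: c_def)
    also have "\<dots> = \<bar>F b - F a\<bar> / 2" using c by (simp add: e_def)
    finally show False using ne by simp
  qed
qed



lemma prod_aint:
  fixes g h :: "real \<Rightarrow> real \<times> real"
  assumes "continuous_on {a..b} g" "h absolutely_integrable_on {a..b}"
  shows "(\<lambda>s. g s \<bullet> h s) absolutely_integrable_on {a..b}"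
proof (rule absolutely_integrable_bounded_measurable_product[where h = "inner :: real \<times> real \<Rightarrow> real \<times> real \<Rightarrow> real"])
  show "bilinear (inner :: real \<times> real \<Rightarrow> real \<times> real \<Rightarrow> real)"
    using bounded_bilinear_inner[where 'a="real \<times> real"] bilinear_conv_bounded_bilinear[where 'a="real\<times>real" and 'b="real\<times>real" and 'c=real]
    by simp
  show "g \<in> borel_measurable (lebesgue_on {a..b})"
    by (rule continuous_imp_measurable_on_sets_lebesgue[OF assms(1)]) simp
  show "bounded (g ` {a..b})"
    using compact_continuous_image[OF assms(1) compact_Icc] by (rule compact_imp_bounded)
  show "{a..b} \<in> sets lebesgue" by simp
  show "h absolutely_integrable_on {a..b}" by (rule assms(2))
qed

lemma osc:
  fixes g h :: "real \<Rightarrow> real \<times> real"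
  assumes g: "continuous_on {a..b} g" and h: "h absolutely_integrable_on {a..b}" and e: "e > 0"
  shows "\<exists>d>0. \<forall>t t'. a \<le> t \<longrightarrow> t \<le> t' \<longrightarrow> t' \<le> b \<longrightarrow> t' - t < d \<longrightarrow>
     norm (integral {t..t'} (\<lambda>s. (g s - g t) \<bullet> h s)) \<le> e * integral {t..t'} (\<lambda>s. norm (h s))"
proof -
  have "uniformly_continuous_on {a..b} g" using g compact_uniformly_continuous compact_Icc by blast
  then obtain d where d: "d > 0" and dd: "\<And>x x'. x \<in> {a..b} \<Longrightarrow> x' \<in> {a..b} \<Longrightarrow> dist x' x < d \<Longrightarrow> dist (g x') (g x) < e"
    by (rule uniformly_continuous_onE[OF _ e]) auto
  have H: "norm (integral {t..t'} (\<lambda>s. (g s - g t) \<bullet> h s)) \<le> e * integral {t..t'} (\<lambda>s. norm (h s))"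
    if tt: "a \<le> t" "t \<le> t'" "t' \<le> b" "t' - t < d" for t t'
  proof -
    have sub: "{t..t'} \<subseteq> {a..b}" using tt by auto
    have h': "h absolutely_integrable_on {t..t'}" using absolutely_integrable_on_subinterval[OF h sub] .
    have gc: "continuous_on {t..t'} (\<lambda>s. g s - g t)"
      using continuous_on_subset[OF g sub] by (intro continuous_intros) auto
    have i1: "(\<lambda>s. (g s - g t) \<bullet> h s) integrable_on {t..t'}"
      using prod_aint[OF gc h'] absolutely_integrable_on_def by blast
    have i2: "(\<lambda>s. e * norm (h s)) integrable_on {t..t'}"
    proof -
      have "(\<lambda>s. norm (h s)) integrable_on {t..t'}" using h' by (simp add: absolutely_integrable_on_def)
      from integrable_on_cmult_left[OF this, of e] show ?thesis by simp
    qed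
    have "norm (integral {t..t'} (\<lambda>s. (g s - g t) \<bullet> h s)) \<le> integral {t..t'} (\<lambda>s. e * norm (h s))"
    proof (rule integral_norm_bound_integral[OF i1 i2])
      fix s assume s: "s \<in> {t..t'}"
      have "dist (g s) (g t) < e" using dd[of t s] s tt by (auto simp: dist_real_def)
      then have "norm (g s - g t) \<le> e" by (simp add: dist_norm)
      then have "norm ((g s - g t) \<bullet> h s) \<le> e * norm (h s)"
      proof -
        have "norm ((g s - g t) \<bullet> h s) \<le> norm (g s - g t) * norm (h s)"
          using Cauchy_Schwarz_ineq2[of "g s - g t" "h s"] by simp
        also have "\<dots> \<le> e * norm (h s)" using \<open>norm (g s - g t) \<le> e\<close> by (rule mult_right_mono) simp
        finally show ?thesis .
      qed
      then show "norm ((g s - g t) \<bullet> h s) \<le> e * norm (h s)" .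
    qed
    also have "\<dots> = e * integral {t..t'} (\<lambda>s. norm (h s))" by simp
    finally show ?thesis .
  qed
  show ?thesis
    apply (rule exI[where x=d])
    using d H by simp
qed


lemma integral_inner_const:
  fixes h :: "real \<Rightarrow> real \<times> real"
  assumes "h integrable_on S"
  shows "integral S (\<lambda>s. c \<bullet> h s) = c \<bullet> integral S h"
  using integral_linear[OF assms bounded_linear_inner_right[of c]] by (simp add: o_def)

lemma integrable_inner_const:
  fixes h :: "real \<Rightarrow> real \<times> real"
  assumes "h integrable_on S"
  shows "(\<lambda>s. c \<bullet> h s) integrable_on S"
  using integrable_linear[OF assms bounded_linear_inner_right[of c]] by (simp add: o_def)

lemma integral_comb:
  fixes f :: "real \<Rightarrow> 'a::banach"
  assumes "f integrable_on {a..b}" "a \<le> t" "t \<le> t'" "t' \<le> b"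
  shows "integral {a..t'} f - integral {a..t} f = integral {t..t'} f"
proof -
  have "f integrable_on {a..t'}" using integrable_subinterval_real[OF assms(1)] assms by auto
  then have "integral {a..t} f + integral {t..t'} f = integral {a..t'} f"
    using Henstock_Kurzweil_Integration.integral_combine[of a t t' f] assms by auto
  then show ?thesis by (simp add: algebra_simps)
qed

lemma zero_int:
  fixes g h :: "real \<Rightarrow> real \<times> real"
  assumes ab: "a \<le> b" and g: "continuous_on {a..b} g" and h: "h absolutely_integrable_on {a..b}"
    and h0: "\<And>s t. a \<le> s \<Longrightarrow> s \<le> t \<Longrightarrow> t \<le> b \<Longrightarrow> integral {s..t} h = 0"
  shows "integral {a..b} (\<lambda>s. g s \<bullet> h s) = 0"
proof -
  define F where "F t = integral {a..t} (\<lambda>s. g s \<bullet> h s)" for t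
  define M where "M t = integral {a..t} (\<lambda>s. norm (h s))" for t
  have gh: "(\<lambda>s. g s \<bullet> h s) integrable_on {a..b}"
    using prod_aint[OF g h] absolutely_integrable_on_def by blast
  have nh: "(\<lambda>s. norm (h s)) integrable_on {a..b}"
    using h absolutely_integrable_on_def by blast
  have "F b = F a"
  proof (rule glue[OF ab])
    fix e :: real assume e: "e > 0"
    obtain d where d: "d > 0" and dd: "\<forall>t t'. a \<le> t \<longrightarrow> t \<le> t' \<longrightarrow> t' \<le> b \<longrightarrow> t' - t < d \<longrightarrow>
     norm (integral {t..t'} (\<lambda>s. (g s - g t) \<bullet> h s)) \<le> e * integral {t..t'} (\<lambda>s. norm (h s))"
      using osc[OF g h e] by (elim exE conjE) (rule that)
    have "\<bar>F t' - F t\<bar> \<le> e * (M t' - M t)"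
      if tt: "a \<le> t" "t \<le> t'" "t' \<le> b" "t' - t < d" for t t'
    proof -
      have sub: "{t..t'} \<subseteq> {a..b}" using tt by auto
      have hi: "h integrable_on {t..t'}"
        using absolutely_integrable_on_subinterval[OF h sub] absolutely_integrable_on_def by blast
      have ghi: "(\<lambda>s. g s \<bullet> h s) integrable_on {t..t'}"
        using integrable_subinterval_real[OF gh sub] .
      have "F t' - F t = integral {t..t'} (\<lambda>s. g s \<bullet> h s)"
        unfolding F_def using integral_comb[OF gh tt(1-3)] .
      also have "\<dots> = integral {t..t'} (\<lambda>s. (g s - g t) \<bullet> h s) + integral {t..t'} (\<lambda>s. g t \<bullet> h s)"
      proof -
        have "integral {t..t'} (\<lambda>s. g s \<bullet> h s - g t \<bullet> h s) = integral {t..t'} (\<lambda>s. g s \<bullet> h s) - integral {t..t'} (\<lambda>s. g t \<bullet> h s)"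
          using integral_diff[OF ghi integrable_inner_const[OF hi]] .
        then show ?thesis by (simp add: inner_diff_left)
      qed
      also have "integral {t..t'} (\<lambda>s. g t \<bullet> h s) = 0"
        using integral_inner_const[OF hi] h0[OF tt(1,2)] tt by simp
      finally have "F t' - F t = integral {t..t'} (\<lambda>s. (g s - g t) \<bullet> h s)" by simp
      moreover have "M t' - M t = integral {t..t'} (\<lambda>s. norm (h s))"
        unfolding M_def using integral_comb[OF nh tt(1-3)] .
      moreover have "norm (integral {t..t'} (\<lambda>s. (g s - g t) \<bullet> h s)) \<le> e * integral {t..t'} (\<lambda>s. norm (h s))"
        using dd tt by simp
      ultimately show ?thesis by simp
    qed
    then show "\<exists>d>0. \<forall>t t'. a \<le> t \<longrightarrow> t \<le> t' \<longrightarrow> t' \<le> b \<longrightarrow> t' - t < d \<longrightarrow>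
                 \<bar>F t' - F t\<bar> \<le> e * (M t' - M t)"
      apply (intro exI[where x=d])
      using d by simp
  qed
  then show ?thesis by (simp add: F_def)
qed

lemma unif_nbhd:
  fixes \<beta> :: "real \<times> real \<Rightarrow> real \<times> real"
  assumes K: "compact K" "K \<subseteq> Q" and Q: "open Q" and c: "continuous_on Q \<beta>" and e: "e > 0"
  obtains r where "r > 0" "\<And>x y. x \<in> K \<Longrightarrow> dist x y < r \<Longrightarrow> y \<in> Q \<and> dist (\<beta> y) (\<beta> x) < e"
proof -
  define G where "G = {U. open U \<and> U \<subseteq> Q \<and> (\<forall>y\<in>U. \<forall>z\<in>U. dist (\<beta> y) (\<beta> z) < e)}"
  have cov: "K \<subseteq> \<Union>G"
  proof
    fix x assume "x \<in> K"
    then have xQ: "x \<in> Q" using K by auto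
    obtain d where d: "d > 0" and dd: "\<And>x'. x' \<in> Q \<Longrightarrow> dist x' x < d \<Longrightarrow> dist (\<beta> x') (\<beta> x) < e / 2"
      using c xQ e unfolding continuous_on_iff by (meson half_gt_zero)
    obtain d' where d': "d' > 0" "ball x d' \<subseteq> Q" using Q xQ openE by blast
    define U where "U = ball x (min d d')"
    have "U \<in> G"
    proof -
      have "U \<subseteq> Q" using d' by (auto simp: U_def)
      moreover have "dist (\<beta> y) (\<beta> z) < e" if "y \<in> U" "z \<in> U" for y z
      proof -
        have "y \<in> Q" "z \<in> Q" using that \<open>U \<subseteq> Q\<close> by auto
        moreover have "dist y x < d" "dist z x < d" using that by (auto simp: U_def dist_commute)
        ultimately have "dist (\<beta> y) (\<beta> x) < e / 2" "dist (\<beta> z) (\<beta> x) < e / 2" using dd by auto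
        then show ?thesis using dist_triangle_half_l by blast
      qed
      ultimately show ?thesis by (auto simp: G_def U_def)
    qed
    moreover have "x \<in> U" using d d' by (simp add: U_def)
    ultimately show "x \<in> \<Union>G" by blast
  qed
  obtain r where r: "r > 0" and rr: "\<And>x. x \<in> K \<Longrightarrow> \<exists>U \<in> G. ball x r \<subseteq> U"
    using Heine_Borel_lemma[OF K(1) cov] by (auto simp: G_def)
  show ?thesis
  proof (rule that[OF r])
    fix x y assume x: "x \<in> K" and xy: "dist x y < r"
    obtain U where U: "U \<in> G" "ball x r \<subseteq> U" using rr[OF x] by blast
    have "y \<in> U" "x \<in> U" using U xy r by auto
    then show "y \<in> Q \<and> dist (\<beta> y) (\<beta> x) < e" using U(1) by (auto simp: G_def)
  qed
qed

lemma chain_int: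
  fixes f :: "real \<times> real \<Rightarrow> real" and \<beta> :: "real \<times> real \<Rightarrow> real \<times> real"
    and \<gamma> \<gamma>' :: "real \<Rightarrow> real \<times> real"
  assumes Q: "open Q" and fd: "\<And>x. x \<in> Q \<Longrightarrow> (f has_derivative (\<lambda>v. \<beta> x \<bullet> v)) (at x)"
    and bc: "continuous_on Q \<beta>" and ab: "a \<le> b" and gc: "continuous_on {a..b} \<gamma>"
    and gQ: "\<gamma> ` {a..b} \<subseteq> Q" and gi: "\<gamma>' absolutely_integrable_on {a..b}"
    and gint: "\<And>s t. a \<le> s \<Longrightarrow> s \<le> t \<Longrightarrow> t \<le> b \<Longrightarrow> integral {s..t} \<gamma>' = \<gamma> t - \<gamma> s"
  shows "integral {a..b} (\<lambda>s. \<beta> (\<gamma> s) \<bullet> \<gamma>' s) = f (\<gamma> b) - f (\<gamma> a)"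
proof -
  have bgc: "continuous_on {a..b} (\<lambda>s. \<beta> (\<gamma> s))"
    using continuous_on_compose2[OF bc gc gQ] .
  define F where "F t = f (\<gamma> t) - integral {a..t} (\<lambda>s. \<beta> (\<gamma> s) \<bullet> \<gamma>' s)" for t
  define M where "M t = integral {a..t} (\<lambda>s. norm (\<gamma>' s))" for t
  have gh: "(\<lambda>s. \<beta> (\<gamma> s) \<bullet> \<gamma>' s) integrable_on {a..b}"
    using prod_aint[OF bgc gi] absolutely_integrable_on_def by blast
  have nh: "(\<lambda>s. norm (\<gamma>' s)) integrable_on {a..b}"
    using gi absolutely_integrable_on_def by blast
  have "F b = F a"
  proof (rule glue[OF ab])
    fix e :: real assume e: "e > 0"
    define e2 where "e2 = e / 2"
    have e2: "e2 > 0" using e by (simp add: e2_def)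
    have K: "compact (\<gamma> ` {a..b})" using compact_continuous_image[OF gc compact_Icc] .
    obtain r where r: "r > 0" and rr: "\<And>x y. x \<in> \<gamma> ` {a..b} \<Longrightarrow> dist x y < r \<Longrightarrow> y \<in> Q \<and> dist (\<beta> y) (\<beta> x) < e2"
      using unif_nbhd[OF K gQ Q bc e2] by blast
    have "uniformly_continuous_on {a..b} \<gamma>" using gc compact_uniformly_continuous compact_Icc by blast
    then obtain d1 where d1: "d1 > 0" and dd1: "\<And>x x'. x \<in> {a..b} \<Longrightarrow> x' \<in> {a..b} \<Longrightarrow> dist x' x < d1 \<Longrightarrow> dist (\<gamma> x') (\<gamma> x) < r"
      by (rule uniformly_continuous_onE[OF _ r]) auto
    obtain d2 where d2: "d2 > 0" and dd2: "\<forall>t t'. a \<le> t \<longrightarrow> t \<le> t' \<longrightarrow> t' \<le> b \<longrightarrow> t' - t < d2 \<longrightarrow>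
     norm (integral {t..t'} (\<lambda>s. (\<beta> (\<gamma> s) - \<beta> (\<gamma> t)) \<bullet> \<gamma>' s)) \<le> e2 * integral {t..t'} (\<lambda>s. norm (\<gamma>' s))"
      using osc[OF bgc gi e2] by (elim exE conjE) (rule that)
    have H: "\<bar>F t' - F t\<bar> \<le> e * (M t' - M t)"
      if tt: "a \<le> t" "t \<le> t'" "t' \<le> b" "t' - t < min d1 d2" for t t'
    proof -
      have sub: "{t..t'} \<subseteq> {a..b}" using tt by auto
      have hA: "\<gamma>' absolutely_integrable_on {t..t'}" using absolutely_integrable_on_subinterval[OF gi sub] .
      have hi: "\<gamma>' integrable_on {t..t'}" using hA absolutely_integrable_on_def by blast
      have nhi: "(\<lambda>s. norm (\<gamma>' s)) integrable_on {t..t'}" using hA absolutely_integrable_on_def by blast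
      have ghi: "(\<lambda>s. \<beta> (\<gamma> s) \<bullet> \<gamma>' s) integrable_on {t..t'}"
        using integrable_subinterval_real[OF gh sub] .
      define x where "x = \<gamma> t"
      define y where "y = \<gamma> t'"
      define N where "N = integral {t..t'} (\<lambda>s. norm (\<gamma>' s))"
      have xK: "x \<in> \<gamma> ` {a..b}" using tt by (auto simp: x_def)
      have yx: "y - x = integral {t..t'} \<gamma>'" using gint[OF tt(1-2)] tt by (simp add: x_def y_def)
      have nyx: "norm (y - x) \<le> N"
        unfolding yx N_def by (rule integral_norm_bound_integral[OF hi nhi]) simp
      have dxy: "dist x y < r"
        using dd1[of t t'] tt by (auto simp: x_def y_def dist_real_def dist_commute)
      have MVT: "norm (f y - f x - \<beta> x \<bullet> (y - x)) \<le> norm (y - x) * e2"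
      proof (rule differentiable_bound_linearization[where S = "ball x r" and f' = "\<lambda>z v. \<beta> z \<bullet> v"])
        show "x + u *\<^sub>R (y - x) \<in> ball x r" if "u \<in> {0..1}" for u
        proof -
          have "dist x (x + u *\<^sub>R (y - x)) = \<bar>u\<bar> * norm (y - x)" by (simp add: dist_norm)
          also have "\<dots> \<le> norm (y - x)" using that by (auto intro: mult_left_le_one_le)
          also have "\<dots> < r" using dxy by (simp add: dist_norm norm_minus_commute)
          finally show ?thesis by simp
        qed
        show "(f has_derivative (\<lambda>v. \<beta> z \<bullet> v)) (at z within ball x r)" if "z \<in> ball x r" for z
        proof -
          have "z \<in> Q" using rr[OF xK, of z] that by (auto simp: dist_commute)
          then show ?thesis using fd has_derivative_at_withinI by blast
        qed
        show "onorm ((\<lambda>v. \<beta> z \<bullet> v) - (\<lambda>v. \<beta> x \<bullet> v)) \<le> e2" if "z \<in> ball x r" for z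
        proof (rule onorm_le)
          fix v
          have "dist (\<beta> z) (\<beta> x) < e2" using rr[OF xK, of z] that by (auto simp: dist_commute)
          then have nz: "norm (\<beta> z - \<beta> x) \<le> e2" by (simp add: dist_norm)
          have "norm (((\<lambda>v. \<beta> z \<bullet> v) - (\<lambda>v. \<beta> x \<bullet> v)) v) = norm ((\<beta> z - \<beta> x) \<bullet> v)"
            by (simp add: inner_diff_left)
          also have "\<dots> \<le> norm (\<beta> z - \<beta> x) * norm v"
            using Cauchy_Schwarz_ineq2[of "\<beta> z - \<beta> x" v] by simp
          also have "\<dots> \<le> e2 * norm v" using nz by (rule mult_right_mono) simp
          finally show "norm (((\<lambda>v. \<beta> z \<bullet> v) - (\<lambda>v. \<beta> x \<bullet> v)) v) \<le> e2 * norm v" .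
        qed
        show "x \<in> ball x r" using r by simp
      qed
      have "F t' - F t = (f y - f x) - integral {t..t'} (\<lambda>s. \<beta> (\<gamma> s) \<bullet> \<gamma>' s)"
        using integral_comb[OF gh tt(1-3)] by (simp add: F_def x_def y_def)
      also have "integral {t..t'} (\<lambda>s. \<beta> (\<gamma> s) \<bullet> \<gamma>' s) =
          integral {t..t'} (\<lambda>s. (\<beta> (\<gamma> s) - \<beta> (\<gamma> t)) \<bullet> \<gamma>' s) + integral {t..t'} (\<lambda>s. \<beta> (\<gamma> t) \<bullet> \<gamma>' s)"
      proof -
        have "integral {t..t'} (\<lambda>s. \<beta> (\<gamma> s) \<bullet> \<gamma>' s - \<beta> (\<gamma> t) \<bullet> \<gamma>' s) = integral {t..t'} (\<lambda>s. \<beta> (\<gamma> s) \<bullet> \<gamma>' s) - integral {t..t'} (\<lambda>s. \<beta> (\<gamma> t) \<bullet> \<gamma>' s)"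
          using integral_diff[OF ghi integrable_inner_const[OF hi]] .
        then show ?thesis by (simp add: inner_diff_left)
      qed
      also have "integral {t..t'} (\<lambda>s. \<beta> (\<gamma> t) \<bullet> \<gamma>' s) = \<beta> x \<bullet> (y - x)"
        using integral_inner_const[OF hi] yx by (simp add: x_def)
      finally have Fd: "F t' - F t = (f y - f x - \<beta> x \<bullet> (y - x)) - integral {t..t'} (\<lambda>s. (\<beta> (\<gamma> s) - \<beta> (\<gamma> t)) \<bullet> \<gamma>' s)"
        by simp
      have I2: "norm (integral {t..t'} (\<lambda>s. (\<beta> (\<gamma> s) - \<beta> (\<gamma> t)) \<bullet> \<gamma>' s)) \<le> e2 * N"
        using dd2 tt by (simp add: N_def)
      have I1: "\<bar>f y - f x - \<beta> x \<bullet> (y - x)\<bar> \<le> e2 * N"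
        using MVT nyx e2 by (smt (verit) mult_left_mono real_norm_def mult.commute)
      have "M t' - M t = N"
        unfolding M_def N_def using integral_comb[OF nh tt(1-3)] .
      moreover have "\<bar>F t' - F t\<bar> \<le> e2 * N + e2 * N"
      proof -
        have "\<bar>F t' - F t\<bar> \<le> \<bar>f y - f x - \<beta> x \<bullet> (y - x)\<bar> + \<bar>integral {t..t'} (\<lambda>s. (\<beta> (\<gamma> s) - \<beta> (\<gamma> t)) \<bullet> \<gamma>' s)\<bar>"
          unfolding Fd by (rule abs_triangle_ineq4)
        then show ?thesis using I1 I2 by (simp add: mult.commute)
      qed
      ultimately show ?thesis by (simp add: e2_def mult.commute)
    qed
    show "\<exists>d>0. \<forall>t t'. a \<le> t \<longrightarrow> t \<le> t' \<longrightarrow> t' \<le> b \<longrightarrow> t' - t < d \<longrightarrow>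
                 \<bar>F t' - F t\<bar> \<le> e * (M t' - M t)"
      apply (intro exI[where x="min d1 d2"])
      using d1 d2 H by simp
  qed
  then show ?thesis by (simp add: F_def)
qed

lemma absint:
  fixes p :: "real \<Rightarrow> real \<times> real"
  assumes "\<And>a b. a \<le> b \<Longrightarrow> p integrable_on {a..b}"
    and "\<And>a b. (\<lambda>t. (norm (p t))\<^sup>2) integrable_on {a..b}"
  shows "p absolutely_integrable_on {a..b}"
proof (cases "a \<le> b")
  case True
  show ?thesis
  proof (rule absolutely_integrable_integrable_bound[where g = "\<lambda>t. 1 + (norm (p t))\<^sup>2"])
    fix x
    have "0 \<le> (norm (p x) - 1)\<^sup>2" by simp
    then have "2 * norm (p x) \<le> 1 + norm (p x) * norm (p x)" by (simp add: power2_eq_square algebra_simps)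
    then show "norm (p x) \<le> 1 + (norm (p x))\<^sup>2" unfolding power2_eq_square using norm_ge_zero[of "p x"] by linarith
  next
    show "p integrable_on {a..b}" using assms(1) True .
    show "(\<lambda>t. 1 + (norm (p t))\<^sup>2) integrable_on {a..b}"
      using integrable_add[OF integrable_const_ivl assms(2)] by simp
  qed
next
  case False
  then have "{a..b} = {}" by simp
  then show ?thesis by (simp add: absolutely_integrable_on_def)
qed

lemma d1_diff:
  assumes "f differentiable (at x)" "g differentiable (at x)"
  shows "d1 (\<lambda>y. f y - g y) x = d1 f x - d1 g x"
proof -
  obtain Df where Df: "(f has_derivative Df) (at x)" using assms(1) by (auto simp: differentiable_def)
  obtain Dg where Dg: "(g has_derivative Dg) (at x)" using assms(2) by (auto simp: differentiable_def)
  have D: "((\<lambda>y. f y - g y) has_derivative (\<lambda>v. Df v - Dg v)) (at x)"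
    using Df Dg by (intro derivative_intros)
  show ?thesis
    using fd_partials[OF D, of "(1,0)"] fd_partials[OF Df, of "(1,0)"] fd_partials[OF Dg, of "(1,0)"] by simp
qed

lemma d2_diff:
  assumes "f differentiable (at x)" "g differentiable (at x)"
  shows "d2 (\<lambda>y. f y - g y) x = d2 f x - d2 g x"
proof -
  obtain Df where Df: "(f has_derivative Df) (at x)" using assms(1) by (auto simp: differentiable_def)
  obtain Dg where Dg: "(g has_derivative Dg) (at x)" using assms(2) by (auto simp: differentiable_def)
  have D: "((\<lambda>y. f y - g y) has_derivative (\<lambda>v. Df v - Dg v)) (at x)"
    using Df Dg by (intro derivative_intros)
  show ?thesis
    using fd_partials[OF D, of "(0,1)"] fd_partials[OF Df, of "(0,1)"] fd_partials[OF Dg, of "(0,1)"] by simp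
qed

lemma inner_pair_eq: "(a, b) \<bullet> v = a * fst v + b * snd v"
  by (cases v) simp

lemma has_int_shift1:
  fixes f :: "real \<Rightarrow> 'a::real_normed_vector"
  assumes "(f has_integral I) {a+1..b+1}"
  shows "((\<lambda>x. f (x + 1)) has_integral I) {a..b}"
  using has_integral_shift_Icc_real[of f 1 I a b] assms by (simp add: o_def add.commute)

lemma int_shift1:
  fixes f :: "real \<Rightarrow> 'a::real_normed_vector"
  assumes "f integrable_on {a+1..b+1}"
  shows "(\<lambda>x. f (x + 1)) integrable_on {a..b}"
  using has_int_shift1[of f _ a b] assms by (auto simp: integrable_on_def)

theorem proposition3p4:
  fixes Q :: "(real \<times> real) set"
    and A1 A2 :: "real \<Rightarrow> real \<times> real \<Rightarrow> real"
    and q q' :: "real \<Rightarrow> real \<times> real"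
  assumes "open Q"
    and "vanishing_H1_dR Q"
    and "twisted_periodic_form Q A1 A2"
    and "W12_loop Q q q'"
  shows "\<forall>k l :: int.
           pullback_integrand A1 A2 q q' integrable_on {real_of_int k .. real_of_int k + 1} \<and>
           integral {real_of_int k .. real_of_int k + 1} (pullback_integrand A1 A2 q q') =
           integral {real_of_int l .. real_of_int l + 1} (pullback_integrand A1 A2 q q')"
proof -
  note Q = assms(1)
  note tw = assms(3)[unfolded twisted_periodic_form_def]
  note lp = assms(4)[unfolded W12_loop_def]
  define A1p where "A1p = (\<lambda>p::real \<times> (real \<times> real). A1 (fst p) (snd p))"
  define A2p where "A2p = (\<lambda>p::real \<times> (real \<times> real). A2 (fst p) (snd p))"
  have sA1: "\<And>n. higher_differentiable_on (UNIV \<times> Q) A1p n"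
    using tw unfolding smooth_on_def A1p_def by blast
  have sA2: "\<And>n. higher_differentiable_on (UNIV \<times> Q) A2p n"
    using tw unfolding smooth_on_def A2p_def by blast
  have dA1: "\<And>s. \<forall>q\<in>Q. deriv (\<lambda>s. A1 s q) (s + 1) = deriv (\<lambda>s. A1 s q) s" using tw by blast
  have dA2: "\<And>s. \<forall>q\<in>Q. deriv (\<lambda>s. A2 s q) (s + 1) = deriv (\<lambda>s. A2 s q) s" using tw by blast
  have dcl: "\<And>x. x \<in> Q \<Longrightarrow> d1 (A2 1) x - d2 (A1 1) x = d1 (A2 0) x - d2 (A1 0) x"
    using tw by (metis add_0)
  have qper: "\<And>t. q (t + 1) = q t" and qQ: "\<And>t. q t \<in> Q"
    and qint: "\<And>a b. a \<le> b \<Longrightarrow> (q' has_integral (q b - q a)) {a..b}"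
    and qsq: "\<And>a b. (\<lambda>t. (norm (q' t))\<^sup>2) integrable_on {a..b}"
    using lp by auto

  have sl1: "\<And>c n. higher_differentiable_on Q (A1 c) n"
    using hd_slice[OF Q sA1] by (simp add: A1p_def)
  have sl2: "\<And>c n. higher_differentiable_on Q (A2 c) n"
    using hd_slice[OF Q sA2] by (simp add: A2p_def)
  have sld1: "\<And>c x. x \<in> Q \<Longrightarrow> A1 c differentiable (at x)"
    using sl1[of _ 1] by simp
  have sld2: "\<And>c x. x \<in> Q \<Longrightarrow> A2 c differentiable (at x)"
    using sl2[of _ 1] by simp

  have tdiff1: "\<And>x s. x \<in> Q \<Longrightarrow> (\<lambda>s. A1 s x) differentiable (at s)"
  proof -
    fix x s assume x: "x \<in> Q"
    have "A1p differentiable (at ((\<lambda>s. (s, x)) s))" using sA1[of 1] x by simp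
    moreover have "(\<lambda>s. (s, x)) differentiable (at s)" by (auto intro!: derivative_intros)
    ultimately have "(A1p \<circ> (\<lambda>s. (s, x))) differentiable (at s)" using differentiable_chain_at by blast
    then show "(\<lambda>s. A1 s x) differentiable (at s)" by (simp add: A1p_def o_def)
  qed
  have tdiff2: "\<And>x s. x \<in> Q \<Longrightarrow> (\<lambda>s. A2 s x) differentiable (at s)"
  proof -
    fix x s assume x: "x \<in> Q"
    have "A2p differentiable (at ((\<lambda>s. (s, x)) s))" using sA2[of 1] x by simp
    moreover have "(\<lambda>s. (s, x)) differentiable (at s)" by (auto intro!: derivative_intros)
    ultimately have "(A2p \<circ> (\<lambda>s. (s, x))) differentiable (at s)" using differentiable_chain_at by blast
    then show "(\<lambda>s. A2 s x) differentiable (at s)" by (simp add: A2p_def o_def)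
  qed

  define B1 where "B1 = (\<lambda>x. A1 1 x - A1 0 x)"
  define B2 where "B2 = (\<lambda>x. A2 1 x - A2 0 x)"
  have Bc1: "A1 (s + 1) x - A1 s x = B1 x" if x: "x \<in> Q" for s x
  proof -
    have "\<forall>s. ((\<lambda>s. A1 (s + 1) x - A1 s x) has_real_derivative 0) (at s)"
    proof
      fix s
      have d0: "((\<lambda>s. A1 s x) has_real_derivative deriv (\<lambda>s. A1 s x) s) (at s)"
        using tdiff1[OF x] DERIV_deriv_iff_real_differentiable by blast
      have "((\<lambda>s. A1 s x) has_real_derivative deriv (\<lambda>s. A1 s x) (s + 1)) (at (s + 1))"
        using tdiff1[OF x] DERIV_deriv_iff_real_differentiable by blast
      then have d1': "((\<lambda>s. A1 (s + 1) x) has_real_derivative deriv (\<lambda>s. A1 s x) (s + 1)) (at s)"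
        using DERIV_shift[of "\<lambda>s. A1 s x" "deriv (\<lambda>s. A1 s x) (s + 1)" s 1] by simp
      have "((\<lambda>s. A1 (s + 1) x - A1 s x) has_real_derivative
              deriv (\<lambda>s. A1 s x) (s + 1) - deriv (\<lambda>s. A1 s x) s) (at s)"
        using d1' d0 by (rule DERIV_diff)
      then show "((\<lambda>s. A1 (s + 1) x - A1 s x) has_real_derivative 0) (at s)"
        using dA1[of s] x by simp
    qed
    from DERIV_isconst_all[OF this, of s 0] show ?thesis by (simp add: B1_def)
  qed
  have Bc2: "A2 (s + 1) x - A2 s x = B2 x" if x: "x \<in> Q" for s x
  proof -
    have "\<forall>s. ((\<lambda>s. A2 (s + 1) x - A2 s x) has_real_derivative 0) (at s)"
    proof
      fix s
      have d0: "((\<lambda>s. A2 s x) has_real_derivative deriv (\<lambda>s. A2 s x) s) (at s)"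
        using tdiff2[OF x] DERIV_deriv_iff_real_differentiable by blast
      have "((\<lambda>s. A2 s x) has_real_derivative deriv (\<lambda>s. A2 s x) (s + 1)) (at (s + 1))"
        using tdiff2[OF x] DERIV_deriv_iff_real_differentiable by blast
      then have d1': "((\<lambda>s. A2 (s + 1) x) has_real_derivative deriv (\<lambda>s. A2 s x) (s + 1)) (at s)"
        using DERIV_shift[of "\<lambda>s. A2 s x" "deriv (\<lambda>s. A2 s x) (s + 1)" s 1] by simp
      have "((\<lambda>s. A2 (s + 1) x - A2 s x) has_real_derivative
              deriv (\<lambda>s. A2 s x) (s + 1) - deriv (\<lambda>s. A2 s x) s) (at s)"
        using d1' d0 by (rule DERIV_diff)
      then show "((\<lambda>s. A2 (s + 1) x - A2 s x) has_real_derivative 0) (at s)"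
        using dA2[of s] x by simp
    qed
    from DERIV_isconst_all[OF this, of s 0] show ?thesis by (simp add: B2_def)
  qed

  have sB1: "smooth_on Q B1" unfolding smooth_on_def B1_def using hd_diff[OF Q sl1 sl1] by blast
  have sB2: "smooth_on Q B2" unfolding smooth_on_def B2_def using hd_diff[OF Q sl2 sl2] by blast
  have closed: "\<forall>x\<in>Q. d1 B2 x = d2 B1 x"
  proof
    fix x assume x: "x \<in> Q"
    have "d1 B2 x = d1 (A2 1) x - d1 (A2 0) x"
      unfolding B2_def by (rule d1_diff[OF sld2[OF x] sld2[OF x]])
    moreover have "d2 B1 x = d2 (A1 1) x - d2 (A1 0) x"
      unfolding B1_def by (rule d2_diff[OF sld1[OF x] sld1[OF x]])
    ultimately show "d1 B2 x = d2 B1 x" using dcl[OF x] by linarith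
  qed
  obtain f where fs: "smooth_on Q f" and fd12: "\<forall>x\<in>Q. d1 f x = B1 x \<and> d2 f x = B2 x"
    using assms(2) sB1 sB2 closed unfolding vanishing_H1_dR_def by blast
  define \<beta> where "\<beta> = (\<lambda>x. (B1 x, B2 x))"
  have fder: "(f has_derivative (\<lambda>v. \<beta> x \<bullet> v)) (at x)" if x: "x \<in> Q" for x
  proof -
    have "f differentiable (at x)" using fs x unfolding smooth_on_def
      by (metis higher_differentiable_on.simps(2) One_nat_def)
    then have D: "(f has_derivative frechet_derivative f (at x)) (at x)"
      using frechet_derivative_works by blast
    have "frechet_derivative f (at x) = (\<lambda>v. \<beta> x \<bullet> v)"
    proof
      fix v show "frechet_derivative f (at x) v = \<beta> x \<bullet> v"
        using fd_partials[OF D, of v] fd12 x by (simp add: \<beta>_def inner_pair_eq)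
    qed
    then show ?thesis using D by simp
  qed
  have \<beta>c: "continuous_on Q \<beta>"
  proof -
    have "continuous_on Q B1" "continuous_on Q B2" using sB1 sB2 unfolding smooth_on_def
      by (metis higher_differentiable_on.simps(1))+
    then show ?thesis unfolding \<beta>_def by (intro continuous_on_Pair)
  qed

  have qi: "\<And>a b. a \<le> b \<Longrightarrow> q' integrable_on {a..b}" using qint by blast
  have qabs: "\<And>a b. q' absolutely_integrable_on {a..b}" using absint[OF qi qsq] .
  have qI: "\<And>s t. s \<le> t \<Longrightarrow> integral {s..t} q' = q t - q s" using qint integral_unique by blast
  have qc: "continuous_on {a..b} q" for a b
  proof (cases "a \<le> b")
    case True
    have "continuous_on {a..b} (\<lambda>x. integral {a..x} q' + q a)"
      using indefinite_integral_continuous_1[OF qi[OF True]] by (intro continuous_intros)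
    moreover have "\<And>x. x \<in> {a..b} \<Longrightarrow> integral {a..x} q' + q a = q x" using qI by simp
    ultimately show ?thesis using continuous_on_cong by (metis (no_types, lifting))
  next
    case False
    then show ?thesis by simp
  qed
  define q1 where "q1 = (\<lambda>s. q' (s + 1))"
  have q1int: "(q1 has_integral (q b - q a)) {a..b}" if "a \<le> b" for a b
    using has_int_shift1[OF qint[of "a+1" "b+1"]] that qper by (simp add: q1_def)
  have q1i: "\<And>a b. a \<le> b \<Longrightarrow> q1 integrable_on {a..b}" using q1int by blast
  have q1sq: "\<And>a b. (\<lambda>t. (norm (q1 t))\<^sup>2) integrable_on {a..b}"
    using int_shift1[OF qsq] by (simp add: q1_def)
  have q1abs: "\<And>a b. q1 absolutely_integrable_on {a..b}" using absint[OF q1i q1sq] .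

  define \<alpha> where "\<alpha> = (\<lambda>t. (A1 t (q t), A2 t (q t)))"
  have \<alpha>c: "continuous_on {a..b} \<alpha>" for a b
  proof -
    have pc: "continuous_on {a..b} (\<lambda>t. (t, q t))" using qc by (intro continuous_on_Pair continuous_intros)
    have im: "(\<lambda>t. (t, q t)) ` {a..b} \<subseteq> UNIV \<times> Q" using qQ by auto
    have c1: "continuous_on (UNIV \<times> Q) A1p" using sA1[of 0] by simp
    have c2: "continuous_on (UNIV \<times> Q) A2p" using sA2[of 0] by simp
    have "continuous_on {a..b} (\<lambda>t. A1p (t, q t))" using continuous_on_compose2[OF c1 pc im] .
    moreover have "continuous_on {a..b} (\<lambda>t. A2p (t, q t))" using continuous_on_compose2[OF c2 pc im] .
    ultimately show ?thesis unfolding \<alpha>_def A1p_def A2p_def by (simp add: continuous_on_Pair)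
  qed
  define P where "P = pullback_integrand A1 A2 q q'"
  have Peq: "P = (\<lambda>t. \<alpha> t \<bullet> q' t)"
    by (rule ext) (simp add: P_def pullback_integrand_def \<alpha>_def inner_pair_eq)
  have Pint: "\<And>a b. P integrable_on {a..b}"
    using prod_aint[OF \<alpha>c qabs] absolutely_integrable_on_def Peq by metis

  have step: "integral {c + 1..c + 1 + 1} P = integral {c..c + 1} P" for c
  proof -
    have sh: "integral {c + 1..c + 1 + 1} P = integral {c..c + 1} (\<lambda>s. P (s + 1))"
      using integral_shift_real_ivl[of "c + 1" 1 "c + 1 + 1" P] by (simp add: add.commute)
    define g where "g = (\<lambda>s. \<alpha> (s + 1))"
    have gc: "continuous_on {c..c+1} g"
    proof -
      have "continuous_on {c..c+1} (\<lambda>s. s + 1)" by (intro continuous_intros)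
      moreover have "(\<lambda>s. s + 1) ` {c..c+1} \<subseteq> {c+1..c+1+1}" by auto
      ultimately show ?thesis unfolding g_def using continuous_on_compose2[OF \<alpha>c[of "c+1" "c+1+1"]] by blast
    qed
    have \<alpha>s: "\<alpha> (s + 1) = \<alpha> s + \<beta> (q s)" for s
      using Bc1[OF qQ[of s], of s] Bc2[OF qQ[of s], of s] qper[of s]
      by (simp add: \<alpha>_def \<beta>_def algebra_simps)
    have Ps: "P (s + 1) = g s \<bullet> (q1 s - q' s) + \<beta> (q s) \<bullet> q' s + P s" for s
      unfolding Peq g_def q1_def using \<alpha>s[of s] by (simp add: inner_diff_right inner_add_left)
    have habs: "(\<lambda>s. q1 s - q' s) absolutely_integrable_on {c..c+1}"
    proof (rule absolutely_integrable_integrable_bound[where g = "\<lambda>s. norm (q1 s) + norm (q' s)"])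
      show "norm (q1 x - q' x) \<le> norm (q1 x) + norm (q' x)" for x by (rule norm_triangle_ineq4)
      show "(\<lambda>s. q1 s - q' s) integrable_on {c..c+1}" using q1i qi by (intro integrable_diff) auto
      show "(\<lambda>s. norm (q1 s) + norm (q' s)) integrable_on {c..c+1}"
        using q1abs qabs by (intro integrable_add) (auto simp: absolutely_integrable_on_def)
    qed
    have h0: "integral {s..t} (\<lambda>s. q1 s - q' s) = 0" if "c \<le> s" "s \<le> t" "t \<le> c + 1" for s t
    proof -
      have "((\<lambda>s. q1 s - q' s) has_integral ((q t - q s) - (q t - q s))) {s..t}"
        using q1int[OF that(2)] qint[OF that(2)] by (rule has_integral_diff)
      then show ?thesis by (simp add: integral_unique)
    qed
    have Z1: "integral {c..c+1} (\<lambda>s. g s \<bullet> (q1 s - q' s)) = 0"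
      using zero_int[OF _ gc habs h0] by simp
    have bqc: "continuous_on {c..c+1} (\<lambda>s. \<beta> (q s))"
      using continuous_on_compose2[OF \<beta>c qc] qQ by blast
    have Z2: "integral {c..c+1} (\<lambda>s. \<beta> (q s) \<bullet> q' s) = 0"
    proof -
      have "integral {c..c+1} (\<lambda>s. \<beta> (q s) \<bullet> q' s) = f (q (c+1)) - f (q c)"
        using chain_int[OF Q fder \<beta>c _ qc _ qabs qI, of c "c+1"] qQ by (simp add: image_subset_iff)
      then show ?thesis using qper by simp
    qed
    have i1: "(\<lambda>s. g s \<bullet> (q1 s - q' s)) integrable_on {c..c+1}"
      using prod_aint[OF gc habs] absolutely_integrable_on_def by blast
    have i2: "(\<lambda>s. \<beta> (q s) \<bullet> q' s) integrable_on {c..c+1}"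
      using prod_aint[OF bqc qabs] absolutely_integrable_on_def by blast
    have "integral {c..c + 1} (\<lambda>s. P (s + 1)) =
        integral {c..c+1} (\<lambda>s. g s \<bullet> (q1 s - q' s) + \<beta> (q s) \<bullet> q' s + P s)"
      using Ps by simp
    also have "\<dots> = integral {c..c+1} (\<lambda>s. g s \<bullet> (q1 s - q' s)) + integral {c..c+1} (\<lambda>s. \<beta> (q s) \<bullet> q' s) + integral {c..c+1} P"
      using integral_add[OF integrable_add[OF i1 i2] Pint] integral_add[OF i1 i2] by simp
    also have "\<dots> = integral {c..c+1} P" using Z1 Z2 by simp
    finally show ?thesis using sh by simp
  qed
  have allk: "integral {real_of_int k..real_of_int k + 1} P = integral {0..0 + 1} P" for k :: int
  proof (induction k rule: int_induct[where k = 0])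
    case base
    then show ?case by simp
  next
    case (step1 i)
    then show ?case using step[of "real_of_int i"] by simp
  next
    case (step2 i)
    then show ?case using step[of "real_of_int i - 1"] by simp
  qed
  show ?thesis
    using allk Pint unfolding P_def by simp
qed


end
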